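(* Let $(\Omega,\mathcal{F},P)$ be a complete probability space with a filtration $\mathbb{F}=(\mathcal{F}_t)_{t\ge0}$ satisfying the usual hypotheses, and let $S,T$ be $\mathbb{F}$-stopping times such that $\mathbb{F}$ jumps locally from $S$ to $T$, i.e. $\mathcal{F}_t\cap\{S\le t<T\}=\mathcal{F}_S\cap\{S\le t<T\}$ for all $t\ge0$. Then every uniformly integrable $\mathbb{F}$-martingale $M$ is a.s. of finite variation on $(S,T]$. In particular, for any positive random variable $\tau$, the càdlàg version of $Z_t=E\{1_{\{\tau>t\}}\mid\mathcal{F}_t\}$ is a.s. of finite variation on $(S,T]$.
   Context: $(S,T]:=\emptyset$ on $\{S\ge T\}$. For a $\sigma$-field $\mathcal{H}$ and event $C$, $\mathcal{H}\cap C=\{B\cap C:B\in\mathcal{H}\}$. *)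

theory Defs
  imports "HOL-Probability.Probability"
begin

text \<open>Time is continuous: the time index set is [0,\<infinity>) \<subseteq> real; values of processes and
  filtrations at negative times are irrelevant. Stopping times take values in [0,\<infinity>] (ennreal).\<close>

definition complete_space_measure :: "'a measure \<Rightarrow> bool" where
  "complete_space_measure M \<longleftrightarrow> (\<forall>A B. B \<in> null_sets M \<longrightarrow> A \<subseteq> B \<longrightarrow> A \<in> sets M)"

definition filtration_on :: "'a measure \<Rightarrow> (real \<Rightarrow> 'a measure) \<Rightarrow> bool" where
  "filtration_on M F \<longleftrightarrow> (\<forall>t\<ge>0. subalgebra M (F t)) \<and>
     (\<forall>s t. 0 \<le> s \<longrightarrow> s \<le> t \<longrightarrow> sets (F s) \<subseteq> sets (F t))"

definition usual_hypotheses :: "'a measure \<Rightarrow> (real \<Rightarrow> 'a measure) \<Rightarrow> bool" where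
  "usual_hypotheses M F \<longleftrightarrow> complete_space_measure M \<and> filtration_on M F \<and>
     null_sets M \<subseteq> sets (F 0) \<and>
     (\<forall>t\<ge>0. sets (F t) = (\<Inter>s\<in>{t<..}. sets (F s)))"

definition is_stopping_time :: "'a measure \<Rightarrow> (real \<Rightarrow> 'a measure) \<Rightarrow> ('a \<Rightarrow> ennreal) \<Rightarrow> bool" where
  "is_stopping_time M F S \<longleftrightarrow> (\<forall>t\<ge>0. {\<omega>\<in>space M. S \<omega> \<le> ennreal t} \<in> sets (F t))"

definition sets_at_stopping_time :: "'a measure \<Rightarrow> (real \<Rightarrow> 'a measure) \<Rightarrow> ('a \<Rightarrow> ennreal) \<Rightarrow> 'a set set" where
  "sets_at_stopping_time M F S =
     {A \<in> sets M. \<forall>t\<ge>0. A \<inter> {\<omega>\<in>space M. S \<omega> \<le> ennreal t} \<in> sets (F t)}"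

definition trace_sets :: "'a set set \<Rightarrow> 'a set \<Rightarrow> 'a set set" where
  "trace_sets H C = {B \<inter> C | B. B \<in> H}"

definition jumps_locally :: "'a measure \<Rightarrow> (real \<Rightarrow> 'a measure) \<Rightarrow> ('a \<Rightarrow> ennreal) \<Rightarrow> ('a \<Rightarrow> ennreal) \<Rightarrow> bool" where
  "jumps_locally M F S T \<longleftrightarrow> (\<forall>t\<ge>0.
     trace_sets (sets (F t)) {\<omega>\<in>space M. S \<omega> \<le> ennreal t \<and> ennreal t < T \<omega>} =
     trace_sets (sets_at_stopping_time M F S) {\<omega>\<in>space M. S \<omega> \<le> ennreal t \<and> ennreal t < T \<omega>})"

definition martingale :: "'a measure \<Rightarrow> (real \<Rightarrow> 'a measure) \<Rightarrow> (real \<Rightarrow> 'a \<Rightarrow> real) \<Rightarrow> bool" where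
  "martingale M F X \<longleftrightarrow>
     (\<forall>t\<ge>0. X t \<in> borel_measurable (F t) \<and> integrable M (X t)) \<and>
     (\<forall>s t. 0 \<le> s \<longrightarrow> s \<le> t \<longrightarrow> (AE \<omega> in M. real_cond_exp M (F s) (X t) \<omega> = X s \<omega>))"

definition uniformly_integrable :: "'a measure \<Rightarrow> (real \<Rightarrow> 'a \<Rightarrow> real) \<Rightarrow> bool" where
  "uniformly_integrable M X \<longleftrightarrow> (\<forall>e>0. \<exists>c. \<forall>t\<ge>0.
     integral\<^sup>L M (\<lambda>\<omega>. if c < \<bar>X t \<omega>\<bar> then \<bar>X t \<omega>\<bar> else 0) \<le> e)"

definition cadlag :: "(real \<Rightarrow> real) \<Rightarrow> bool" where
  "cadlag f \<longleftrightarrow> (\<forall>t\<ge>0. (f \<longlongrightarrow> f t) (at_right t)) \<and> (\<forall>t>0. \<exists>l. (f \<longlongrightarrow> l) (at_left t))"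

definition finite_variation_on :: "(real \<Rightarrow> real) \<Rightarrow> real set \<Rightarrow> bool" where
  "finite_variation_on f I \<longleftrightarrow> (\<exists>B. \<forall>xs. sorted xs \<longrightarrow> set xs \<subseteq> I \<longrightarrow>
     (\<Sum>i<length xs - 1. \<bar>f (xs ! Suc i) - f (xs ! i)\<bar>) \<le> B)"

definition stoch_interval_oc :: "('a \<Rightarrow> ennreal) \<Rightarrow> ('a \<Rightarrow> ennreal) \<Rightarrow> 'a \<Rightarrow> real set" where
  "stoch_interval_oc S T \<omega> = {t. 0 \<le> t \<and> S \<omega> < ennreal t \<and> ennreal t \<le> T \<omega>}"

text \<open>A process is (a.s.) of finite variation on (S,T]: almost every path has finite variation
  on (S,T] \<inter> [0,u] for every u \<ge> 0 (i.e. 1_{(S,T]}\<cdot>X is a finite-variation process).\<close>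
definition fv_on_stoch_interval :: "'a measure \<Rightarrow> (real \<Rightarrow> 'a \<Rightarrow> real) \<Rightarrow> ('a \<Rightarrow> ennreal) \<Rightarrow> ('a \<Rightarrow> ennreal) \<Rightarrow> bool" where
  "fv_on_stoch_interval M X S T \<longleftrightarrow> (AE \<omega> in M. \<forall>u\<ge>0.
     finite_variation_on (\<lambda>t. X t \<omega>) (stoch_interval_oc S T \<omega> \<inter> {0..u}))"

end

theory Submission
  imports Defs
begin


lemma tele_bound:
  fixes g :: "real \<Rightarrow> real"
  assumes "sorted xs" "set xs \<subseteq> A"
    and mono: "\<And>x y. x \<in> A \<Longrightarrow> y \<in> A \<Longrightarrow> x \<le> y \<Longrightarrow> g y \<le> g x"
    and bnd: "\<And>x. x \<in> A \<Longrightarrow> 0 \<le> g x \<and> g x \<le> c" and "0 \<le> c"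
  shows "(\<Sum>i<length xs - 1. \<bar>g (xs ! Suc i) - g (xs ! i)\<bar>) \<le> c"
proof (cases "xs = []")
  case True then show ?thesis using assms by simp
next
  case False
  have "(\<Sum>i<length xs - 1. \<bar>g (xs ! Suc i) - g (xs ! i)\<bar>)
      = (\<Sum>i<length xs - 1. g (xs ! i) - g (xs ! Suc i))"
  proof (rule sum.cong)
    fix i assume "i \<in> {..<length xs - 1}"
    then have i: "Suc i < length xs" by auto
    have "xs ! i \<le> xs ! Suc i" using sorted_nth_mono[OF assms(1), of i "Suc i"] i by auto
    moreover have "xs ! i \<in> A" "xs ! Suc i \<in> A" using i assms(2) by auto
    ultimately have "g (xs ! Suc i) \<le> g (xs ! i)" using mono by blast
    then show "\<bar>g (xs ! Suc i) - g (xs ! i)\<bar> = g (xs ! i) - g (xs ! Suc i)" by simp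
  qed simp
  also have "\<dots> = g (xs ! 0) - g (xs ! (length xs - 1))"
    by (rule sum_lessThan_telescope'[where f = "\<lambda>i. g (xs ! i)"])
  also have "\<dots> \<le> c"
  proof -
    have "xs ! 0 \<in> A" "xs ! (length xs - 1) \<in> A" using False assms(2) by auto
    then show ?thesis using bnd[of "xs ! 0"] bnd[of "xs ! (length xs - 1)"] by linarith
  qed
  finally show ?thesis .
qed

lemma ratio_step:
  fixes a1 a2 b a1' a2' b' e c1 c2 :: real
  assumes "e > 0" "e \<le> b" "e \<le> b'" "\<bar>a1 - a2\<bar> \<le> c1 + c2"
  shows "\<bar>(a1' - a2')/b' - (a1 - a2)/b\<bar>
     \<le> (\<bar>a1' - a1\<bar> + \<bar>a2' - a2\<bar>)/e + (c1 + c2)/e^2 * \<bar>b' - b\<bar>"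
proof -
  have bp: "b > 0" "b' > 0" using assms by auto
  have eq: "(a1' - a2')/b' - (a1 - a2)/b = ((a1' - a1) - (a2' - a2))/b' + (a1 - a2) * ((b - b')/(b*b'))"
    using bp by (simp add: field_simps)
  have t1: "\<bar>((a1' - a1) - (a2' - a2))/b'\<bar> \<le> (\<bar>a1' - a1\<bar> + \<bar>a2' - a2\<bar>)/e"
  proof -
    have "\<bar>((a1' - a1) - (a2' - a2))/b'\<bar> = \<bar>(a1' - a1) - (a2' - a2)\<bar>/b'" using bp by simp
    also have "\<dots> \<le> (\<bar>a1' - a1\<bar> + \<bar>a2' - a2\<bar>)/b'"
      using bp by (intro divide_right_mono) auto
    also have "\<dots> \<le> (\<bar>a1' - a1\<bar> + \<bar>a2' - a2\<bar>)/e"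
      using assms by (intro divide_left_mono) auto
    finally show ?thesis .
  qed
  have t2: "\<bar>(a1 - a2) * ((b - b')/(b*b'))\<bar> \<le> (c1 + c2)/e^2 * \<bar>b' - b\<bar>"
  proof -
    have "\<bar>(a1 - a2) * ((b - b')/(b*b'))\<bar> = \<bar>a1 - a2\<bar> * (\<bar>b' - b\<bar>/(b*b'))"
      using bp by (simp add: abs_mult abs_minus_commute)
    also have "\<dots> \<le> (c1 + c2) * (\<bar>b' - b\<bar>/(e^2))"
    proof (rule mult_mono)
      have "e^2 \<le> b * b'" using assms by (simp add: power2_eq_square mult_mono)
      moreover have "e^2 > 0" using assms by simp
      ultimately show "\<bar>b' - b\<bar>/(b*b') \<le> \<bar>b' - b\<bar>/(e^2)"
        using bp by (intro divide_left_mono) auto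
    qed (use assms bp in auto)
    finally show ?thesis by simp
  qed
  show ?thesis unfolding eq using t1 t2 abs_triangle_ineq[of "((a1' - a1) - (a2' - a2))/b'" "(a1 - a2) * ((b - b')/(b*b'))"]
    by linarith
qed

lemma stepA:
  fixes f a1 a2 b :: "real \<Rightarrow> real"
  assumes "sorted xs" "set xs \<subseteq> R" "e > 0" "0 \<le> c1" "0 \<le> c2" "0 \<le> c3"
    and fq: "\<And>q. q \<in> R \<Longrightarrow> f q = (a1 q - a2 q) / b q"
    and mono: "\<And>q q'. q \<in> R \<Longrightarrow> q' \<in> R \<Longrightarrow> q \<le> q' \<Longrightarrow> a1 q' \<le> a1 q \<and> a2 q' \<le> a2 q \<and> b q' \<le> b q"
    and bnd: "\<And>q. q \<in> R \<Longrightarrow> 0 \<le> a1 q \<and> a1 q \<le> c1 \<and> 0 \<le> a2 q \<and> a2 q \<le> c2 \<and> e \<le> b q \<and> b q \<le> c3"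
  shows "(\<Sum>i<length xs - 1. \<bar>f (xs ! Suc i) - f (xs ! i)\<bar>) \<le> c1/e + c2/e + (c1 + c2)/e^2 * c3"
proof -
  let ?K = "(c1 + c2)/e^2"
  have K: "?K \<ge> 0" using assms by simp
  have "(\<Sum>i<length xs - 1. \<bar>f (xs ! Suc i) - f (xs ! i)\<bar>)
     \<le> (\<Sum>i<length xs - 1. \<bar>a1 (xs ! Suc i) - a1 (xs ! i)\<bar> / e + \<bar>a2 (xs ! Suc i) - a2 (xs ! i)\<bar> / e
            + ?K * \<bar>b (xs ! Suc i) - b (xs ! i)\<bar>)"
  proof (rule sum_mono)
    fix i assume "i \<in> {..<length xs - 1}"
    then have i: "Suc i < length xs" by auto
    have R: "xs ! i \<in> R" "xs ! Suc i \<in> R" using i assms(2) by auto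
    have "\<bar>a1 (xs ! i) - a2 (xs ! i)\<bar> \<le> c1 + c2" using bnd[OF R(1)] by linarith
    from ratio_step[OF \<open>e > 0\<close> _ _ this, of "b (xs ! i)" "b (xs ! Suc i)" "a1 (xs ! Suc i)" "a2 (xs ! Suc i)"]
    show "\<bar>f (xs ! Suc i) - f (xs ! i)\<bar> \<le> \<bar>a1 (xs ! Suc i) - a1 (xs ! i)\<bar> / e + \<bar>a2 (xs ! Suc i) - a2 (xs ! i)\<bar> / e
            + ?K * \<bar>b (xs ! Suc i) - b (xs ! i)\<bar>"
      using bnd[OF R(1)] bnd[OF R(2)] fq[OF R(1)] fq[OF R(2)] by (simp add: add_divide_distrib)
  qed
  also have "\<dots> = (\<Sum>i<length xs - 1. \<bar>a1 (xs ! Suc i) - a1 (xs ! i)\<bar>) / e + (\<Sum>i<length xs - 1. \<bar>a2 (xs ! Suc i) - a2 (xs ! i)\<bar>) / e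
            + ?K * (\<Sum>i<length xs - 1. \<bar>b (xs ! Suc i) - b (xs ! i)\<bar>)"
    by (simp add: sum.distrib sum_divide_distrib sum_distrib_left)
  also have "\<dots> \<le> c1/e + c2/e + ?K * c3"
  proof -
    have s1: "(\<Sum>i<length xs - 1. \<bar>a1 (xs ! Suc i) - a1 (xs ! i)\<bar>) \<le> c1"
      by (rule tele_bound[OF assms(1,2)]) (use mono bnd assms in auto)
    have s2: "(\<Sum>i<length xs - 1. \<bar>a2 (xs ! Suc i) - a2 (xs ! i)\<bar>) \<le> c2"
      by (rule tele_bound[OF assms(1,2)]) (use mono bnd assms in auto)
    have s3: "(\<Sum>i<length xs - 1. \<bar>b (xs ! Suc i) - b (xs ! i)\<bar>) \<le> c3"
    proof (rule tele_bound[OF assms(1,2)])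
      fix x assume "x \<in> R" then show "0 \<le> b x \<and> b x \<le> c3" using bnd[of x] assms(3) by auto
    qed (use mono assms in auto)
    show ?thesis using s1 s2 s3 K \<open>e > 0\<close>
      by (intro add_mono divide_right_mono mult_left_mono) auto
  qed
  finally show ?thesis .
qed

lemma evr: "0 < c \<Longrightarrow> (\<And>d. 0 < d \<Longrightarrow> d < c \<Longrightarrow> P d) \<Longrightarrow> eventually P (at_right (0::real))"
  unfolding eventually_at_right_field by (rule exI[of _ c]) auto

lemma stepB:
  fixes f :: "real \<Rightarrow> real" and s T :: ennreal
  assumes rc: "\<And>t. 0 \<le> t \<Longrightarrow> (f \<longlongrightarrow> f t) (at_right t)"
    and A: "\<And>xs. sorted xs \<Longrightarrow> set xs \<subseteq> R \<Longrightarrow> (\<Sum>i<length xs - 1. \<bar>f (xs ! Suc i) - f (xs ! i)\<bar>) \<le> V"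
    and Rdef: "R = {q. q \<in> \<rat> \<and> 0 \<le> q \<and> q \<le> n \<and> s < ennreal q \<and> ennreal q < T}"
    and un: "u < n"
    and xs: "sorted xs" "set xs \<subseteq> {t. 0 \<le> t \<and> s < ennreal t \<and> ennreal t < T \<and> t \<le> u}"
  shows "(\<Sum>i<length xs - 1. \<bar>f (xs ! Suc i) - f (xs ! i)\<bar>) \<le> V"
proof (rule field_le_epsilon)
  fix \<epsilon> :: real assume "0 < \<epsilon>"
  define m where "m = length xs"
  define \<eta> where "\<eta> = \<epsilon> / (2 * (real m + 1))"
  have \<eta>: "\<eta> > 0" using \<open>0 < \<epsilon>\<close> unfolding \<eta>_def by simp
  have ev1: "eventually (\<lambda>d. \<forall>x\<in>set xs. \<forall>y. x < y \<and> y < x + d \<longrightarrow> \<bar>f y - f x\<bar> < \<eta>) (at_right 0)"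
  proof (rule eventually_ball_finite, simp, rule ballI)
    fix x assume x: "x \<in> set xs"
    then have "0 \<le> x" using xs by auto
    from tendstoD[OF rc[OF this] \<eta>] obtain b where b: "b > x" "\<And>y. y > x \<Longrightarrow> y < b \<Longrightarrow> dist (f y) (f x) < \<eta>"
      unfolding eventually_at_right_field by blast
    show "eventually (\<lambda>d. \<forall>y. x < y \<and> y < x + d \<longrightarrow> \<bar>f y - f x\<bar> < \<eta>) (at_right 0)"
      by (rule evr[of "b - x"]) (use b in \<open>auto simp: dist_real_def\<close>)
  qed
  have ev2: "eventually (\<lambda>d. \<forall>x\<in>set xs. \<forall>x'\<in>set xs. x < x' \<longrightarrow> d \<le> x' - x) (at_right 0)"
  proof (rule eventually_ball_finite, simp, rule ballI, rule eventually_ball_finite, simp, rule ballI)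
    fix x x' assume "x \<in> set xs" "x' \<in> set xs"
    show "eventually (\<lambda>d. x < x' \<longrightarrow> d \<le> x' - x) (at_right 0)"
    proof (cases "x < x'")
      case True then show ?thesis by (intro evr[of "x' - x"]) auto
    qed (simp)
  qed
  have ev3: "eventually (\<lambda>d. \<forall>x\<in>set xs. x + d \<le> n \<and> ennreal (x + d) \<le> T) (at_right 0)"
  proof (rule eventually_ball_finite, simp, rule ballI)
    fix x assume x: "x \<in> set xs"
    then have x0: "0 \<le> x" "x \<le> u" "ennreal x < T" using xs by auto
    show "eventually (\<lambda>d. x + d \<le> n \<and> ennreal (x + d) \<le> T) (at_right 0)"
    proof (cases T rule: ennreal_cases)
      case (real t0)
      then have "x < t0" using x0 by (simp add: ennreal_less_iff)
      then show ?thesis using real un x0 by (intro evr[of "min (n - x) (t0 - x)"]) (auto simp del: ennreal_plus intro!: ennreal_leI)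
    next
      case top
      then show ?thesis using un x0 by (intro evr[of "n - x"]) auto
    qed
  qed
  have ev4: "eventually (\<lambda>d. 0 < d) (at_right (0::real))" by (rule evr[of 1]) auto
  from eventually_happens[OF eventually_conj[OF ev4 eventually_conj[OF ev1 eventually_conj[OF ev2 ev3]]]]
  obtain \<delta> where \<delta>: "0 < \<delta>"
    and d1: "\<And>x y. x \<in> set xs \<Longrightarrow> x < y \<Longrightarrow> y < x + \<delta> \<Longrightarrow> \<bar>f y - f x\<bar> < \<eta>"
    and d2: "\<And>x x'. x \<in> set xs \<Longrightarrow> x' \<in> set xs \<Longrightarrow> x < x' \<Longrightarrow> \<delta> \<le> x' - x"
    and d3: "\<And>x. x \<in> set xs \<Longrightarrow> x + \<delta> \<le> n \<and> ennreal (x + \<delta>) \<le> T"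
    by (auto simp: trivial_limit_at_right_real)
  define qf where "qf x = (SOME q. q \<in> \<rat> \<and> x < q \<and> q < x + \<delta>)" for x
  have qf: "qf x \<in> \<rat> \<and> x < qf x \<and> qf x < x + \<delta>" for x
  proof -
    have "\<exists>q. q \<in> \<rat> \<and> x < q \<and> q < x + \<delta>" using Rats_dense_in_real[of x "x + \<delta>"] \<delta> by auto
    then show ?thesis unfolding qf_def by (rule someI_ex)
  qed
  define qs where "qs = map qf xs"
  have lq: "length qs = m" unfolding qs_def m_def by simp
  have sq: "sorted qs" unfolding sorted_iff_nth_mono
  proof (intro allI impI)
    fix i j assume ij: "i \<le> j" "j < length qs"
    then have ij': "j < length xs" using lq m_def by simp
    have le: "xs ! i \<le> xs ! j" using sorted_nth_mono[OF xs(1) ij(1) ij'] .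
    have mem: "xs ! i \<in> set xs" "xs ! j \<in> set xs" using ij ij' by auto
    show "qs ! i \<le> qs ! j"
    proof (cases "xs ! i = xs ! j")
      case True then show ?thesis using ij ij' unfolding qs_def by simp
    next
      case False
      then have "xs ! i < xs ! j" using le by simp
      then have "\<delta> \<le> xs ! j - xs ! i" using d2 mem by blast
      then show ?thesis using ij ij' qf[of "xs ! i"] qf[of "xs ! j"] unfolding qs_def by simp
    qed
  qed
  have setq: "set qs \<subseteq> R"
  proof
    fix q assume "q \<in> set qs"
    then obtain x where x: "x \<in> set xs" "q = qf x" unfolding qs_def by auto
    then have x0: "0 \<le> x" "s < ennreal x" "ennreal x < T" using xs by auto
    have q: "q \<in> \<rat>" "x < q" "q < x + \<delta>" using qf x by auto
    have "ennreal q < ennreal (x + \<delta>)" using q x0 \<delta> by (intro ennreal_lessI) auto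
    then have "ennreal q < T" using d3[OF x(1)] by (meson less_le_trans)
    moreover have "s < ennreal q" using x0(2) ennreal_leI[of x q] q by (meson less_le_trans less_imp_le)
    ultimately show "q \<in> R" unfolding Rdef using q x0 d3[OF x(1)] by auto
  qed
  have "(\<Sum>i<length xs - 1. \<bar>f (xs ! Suc i) - f (xs ! i)\<bar>)
      \<le> (\<Sum>i<length xs - 1. \<bar>f (qs ! Suc i) - f (qs ! i)\<bar> + 2 * \<eta>)"
  proof (rule sum_mono)
    fix i assume "i \<in> {..<length xs - 1}"
    then have i: "Suc i < length xs" by auto
    have mem: "xs ! i \<in> set xs" "xs ! Suc i \<in> set xs" using i by auto
    have e1: "\<bar>f (qf (xs ! i)) - f (xs ! i)\<bar> < \<eta>" using d1[OF mem(1)] qf by blast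
    have e2: "\<bar>f (qf (xs ! Suc i)) - f (xs ! Suc i)\<bar> < \<eta>" using d1[OF mem(2)] qf by blast
    have "qs ! i = qf (xs ! i)" "qs ! Suc i = qf (xs ! Suc i)" using i unfolding qs_def by auto
    then show "\<bar>f (xs ! Suc i) - f (xs ! i)\<bar> \<le> \<bar>f (qs ! Suc i) - f (qs ! i)\<bar> + 2 * \<eta>"
      using e1 e2 by (simp add: abs_le_iff abs_less_iff) linarith
  qed
  also have "\<dots> = (\<Sum>i<length qs - 1. \<bar>f (qs ! Suc i) - f (qs ! i)\<bar>) + real (m - 1) * (2 * \<eta>)"
    using lq m_def by (simp add: sum.distrib)
  also have "\<dots> \<le> V + \<epsilon>"
  proof -
    have "real (m - 1) * (2 * \<eta>) \<le> (real m + 1) * (2 * \<eta>)" using \<eta> by (intro mult_right_mono) auto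
    also have "\<dots> = \<epsilon>" unfolding \<eta>_def by (simp add: field_simps)
    finally show ?thesis using A[OF sq setq] by linarith
  qed
  finally show "(\<Sum>i<length xs - 1. \<bar>f (xs ! Suc i) - f (xs ! i)\<bar>) \<le> V + \<epsilon>" .
qed

lemma evl: "b < x \<Longrightarrow> (\<And>y. b < y \<Longrightarrow> y < x \<Longrightarrow> P y) \<Longrightarrow> eventually P (at_left (x::real))"
  unfolding eventually_at_left_field by (rule exI[of _ b]) auto

lemma det_fv:
  fixes f a1 a2 b :: "real \<Rightarrow> real" and s T :: ennreal
  assumes cad: "cadlag f" and u: "0 \<le> u" "u < n" and e: "e > 0" and c: "0 \<le> c1" "0 \<le> c2" "0 \<le> c3"
    and Rdef: "R = {q. q \<in> \<rat> \<and> 0 \<le> q \<and> q \<le> n \<and> s < ennreal q \<and> ennreal q < T}"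
    and fq: "\<And>q. q \<in> R \<Longrightarrow> f q = (a1 q - a2 q) / b q"
    and mono: "\<And>q q'. q \<in> R \<Longrightarrow> q' \<in> R \<Longrightarrow> q \<le> q' \<Longrightarrow> a1 q' \<le> a1 q \<and> a2 q' \<le> a2 q \<and> b q' \<le> b q"
    and bnd: "\<And>q. q \<in> R \<Longrightarrow> 0 \<le> a1 q \<and> a1 q \<le> c1 \<and> 0 \<le> a2 q \<and> a2 q \<le> c2 \<and> e \<le> b q \<and> b q \<le> c3"
  shows "finite_variation_on f ({t. 0 \<le> t \<and> s < ennreal t \<and> ennreal t \<le> T} \<inter> {0..u})"
proof -
  define V where "V = c1/e + c2/e + (c1 + c2)/e^2 * c3"
  have rc: "\<And>t. 0 \<le> t \<Longrightarrow> (f \<longlongrightarrow> f t) (at_right t)" using cad unfolding cadlag_def by auto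
  have B0: "(\<Sum>i<length xs - 1. \<bar>f (xs ! Suc i) - f (xs ! i)\<bar>) \<le> V"
    if "sorted xs" "set xs \<subseteq> {t. 0 \<le> t \<and> s < ennreal t \<and> ennreal t < T \<and> t \<le> u}" for xs
  proof (rule stepB[OF rc _ Rdef u(2) that])
    fix ys assume "sorted ys" "set ys \<subseteq> R"
    from stepA[OF this e c fq mono bnd] show "(\<Sum>i<length ys - 1. \<bar>f (ys ! Suc i) - f (ys ! i)\<bar>) \<le> V"
      unfolding V_def .
  qed
  show ?thesis
  proof (cases "T = top \<or> ennreal u < T")
    case True
    show ?thesis unfolding finite_variation_on_def
    proof (intro exI allI impI)
      fix xs :: "real list" assume xs: "sorted xs" "set xs \<subseteq> {t. 0 \<le> t \<and> s < ennreal t \<and> ennreal t \<le> T} \<inter> {0..u}"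
      have "set xs \<subseteq> {t. 0 \<le> t \<and> s < ennreal t \<and> ennreal t < T \<and> t \<le> u}"
      proof
        fix t assume "t \<in> set xs"
        then have t: "0 \<le> t" "s < ennreal t" "ennreal t \<le> T" "t \<le> u" using xs by auto
        have "ennreal t < T"
          using True ennreal_leI[OF t(4)] by (metis ennreal_less_top le_less_trans)
        then show "t \<in> {t. 0 \<le> t \<and> s < ennreal t \<and> ennreal t < T \<and> t \<le> u}" using t by auto
      qed
      then show "(\<Sum>i<length xs - 1. \<bar>f (xs ! Suc i) - f (xs ! i)\<bar>) \<le> V" using B0 xs(1) by simp
    qed
  next
    case False
    then obtain t0 where t0: "T = ennreal t0" "0 \<le> t0" "t0 \<le> u"
    proof (cases T rule: ennreal_cases)
      case (real r)
      then have "\<not> u < r" using False u(1) by (auto simp: ennreal_less_iff)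
      then show ?thesis using that[of r] real by simp
    qed (use False in simp)
    define L where "L = (SOME l. (f \<longlongrightarrow> l) (at_left t0))"
    show ?thesis unfolding finite_variation_on_def
    proof (intro exI allI impI)
      fix xs :: "real list" assume xs: "sorted xs" "set xs \<subseteq> {t. 0 \<le> t \<and> s < ennreal t \<and> ennreal t \<le> T} \<inter> {0..u}"
      have xsb: "\<And>t. t \<in> set xs \<Longrightarrow> 0 \<le> t \<and> s < ennreal t \<and> t \<le> t0 \<and> t \<le> u"
        using xs t0 by (auto simp: ennreal_le_iff2)
      show "(\<Sum>i<length xs - 1. \<bar>f (xs ! Suc i) - f (xs ! i)\<bar>) \<le> V + (\<bar>f t0 - L\<bar> + 1)"
      proof (cases "t0 \<in> set xs")
        case False
        have "set xs \<subseteq> {t. 0 \<le> t \<and> s < ennreal t \<and> ennreal t < T \<and> t \<le> u}"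
        proof
          fix t assume tin: "t \<in> set xs"
          then have t: "0 \<le> t" "s < ennreal t" "t \<le> t0" "t \<le> u" "t \<noteq> t0" using xsb False by auto
          then have "ennreal t < T" using t0 by (intro ennreal_lessI[of t0 t, folded t0(1)]) auto
          then show "t \<in> {t. 0 \<le> t \<and> s < ennreal t \<and> ennreal t < T \<and> t \<le> u}" using t by auto
        qed
        from B0[OF xs(1) this] show ?thesis by simp
      next
        case True
        have st0: "s < ennreal t0" using xsb[OF True] by auto
        then obtain s0 where s0: "s = ennreal s0" "0 \<le> s0" by (cases s rule: ennreal_cases) auto
        have s0t0: "s0 < t0" using st0 s0 by (simp add: ennreal_less_iff)
        then have t0pos: "t0 > 0" using s0 by linarith
        have "\<exists>l. (f \<longlongrightarrow> l) (at_left t0)" using cad t0pos unfolding cadlag_def by auto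
        then have Lim: "(f \<longlongrightarrow> L) (at_left t0)" unfolding L_def by (rule someI_ex)
        have ev1: "eventually (\<lambda>y. dist (f y) L < 1) (at_left t0)" using tendstoD[OF Lim] by simp
        have ev2: "eventually (\<lambda>y. \<forall>x\<in>set xs. x < t0 \<longrightarrow> x < y) (at_left t0)"
        proof (rule eventually_ball_finite, simp, rule ballI)
          fix x assume "x \<in> set xs"
          show "eventually (\<lambda>y. x < t0 \<longrightarrow> x < y) (at_left t0)"
          proof (cases "x < t0")
            case True then show ?thesis by (intro evl[of x]) auto
          qed simp
        qed
        have ev3: "eventually (\<lambda>y. s0 < y \<and> y < t0) (at_left t0)" using s0t0 by (intro evl[of s0]) auto
        from eventually_happens[OF eventually_conj[OF ev1 eventually_conj[OF ev2 ev3]]]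
        obtain y where y: "dist (f y) L < 1" "\<And>x. x \<in> set xs \<Longrightarrow> x < t0 \<Longrightarrow> x < y" "s0 < y" "y < t0"
          by (auto simp: trivial_limit_at_left_real)
        define rep where "rep x = (if x = t0 then y else x)" for x
        define xs' where "xs' = map rep xs"
        have l': "length xs' = length xs" unfolding xs'_def by simp
        have set': "set xs' \<subseteq> {t. 0 \<le> t \<and> s < ennreal t \<and> ennreal t < T \<and> t \<le> u}"
        proof
          fix t assume "t \<in> set xs'"
          then obtain x where x: "x \<in> set xs" "t = rep x" unfolding xs'_def by auto
          show "t \<in> {t. 0 \<le> t \<and> s < ennreal t \<and> ennreal t < T \<and> t \<le> u}"
          proof (cases "x = t0")
            case True
            then have "t = y" using x rep_def by simp
            moreover have "ennreal y < T" using t0 t0pos y by (auto intro: ennreal_lessI)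
            moreover have "s < ennreal y" using s0 y by (auto simp: ennreal_less_iff)
            ultimately show ?thesis using s0 y t0 by auto
          next
            case False
            then have t: "t = x" using x rep_def by simp
            have "x < t0" using xsb[OF x(1)] False by auto
            then have "ennreal x < T" using t0 t0pos by (auto intro: ennreal_lessI)
            then show ?thesis using t xsb[OF x(1)] by auto
          qed
        qed
        have sorted': "sorted xs'" unfolding sorted_iff_nth_mono
        proof (intro allI impI)
          fix i j assume ij: "i \<le> j" "j < length xs'"
          then have j: "j < length xs" using l' by simp
          have le: "xs ! i \<le> xs ! j" using sorted_nth_mono[OF xs(1) ij(1) j] .
          have mem: "xs ! i \<in> set xs" "xs ! j \<in> set xs" using ij j by auto
          have b: "xs ! i \<le> t0" "xs ! j \<le> t0" using xsb mem by auto
          have "rep (xs ! i) \<le> rep (xs ! j)"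
            using le b y(2)[OF mem(1)] unfolding rep_def by auto
          then show "xs' ! i \<le> xs' ! j" using ij j unfolding xs'_def by simp
        qed
        define P where "P i = (xs ! i \<noteq> t0 \<and> xs ! Suc i = t0)" for i
        define c where "c = \<bar>f t0 - f y\<bar>"
        have "(\<Sum>i<length xs - 1. \<bar>f (xs ! Suc i) - f (xs ! i)\<bar>)
            \<le> (\<Sum>i<length xs - 1. \<bar>f (xs' ! Suc i) - f (xs' ! i)\<bar> + (if P i then c else 0))"
        proof (rule sum_mono)
          fix i assume "i \<in> {..<length xs - 1}"
          then have i: "Suc i < length xs" by auto
          have mem: "xs ! i \<in> set xs" "xs ! Suc i \<in> set xs" using i by auto
          have le: "xs ! i \<le> xs ! Suc i" using sorted_nth_mono[OF xs(1), of i "Suc i"] i by auto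
          have b: "xs ! i \<le> t0" "xs ! Suc i \<le> t0" using xsb mem by auto
          have e': "xs' ! i = rep (xs ! i)" "xs' ! Suc i = rep (xs ! Suc i)" using i unfolding xs'_def by auto
          show "\<bar>f (xs ! Suc i) - f (xs ! i)\<bar> \<le> \<bar>f (xs' ! Suc i) - f (xs' ! i)\<bar> + (if P i then c else 0)"
            unfolding e' rep_def P_def c_def using le b
            by (cases "xs ! i = t0"; cases "xs ! Suc i = t0") auto
        qed
        also have "\<dots> = (\<Sum>i<length xs' - 1. \<bar>f (xs' ! Suc i) - f (xs' ! i)\<bar>) + c * real (card {i\<in>{..<length xs - 1}. P i})"
          using l' by (simp add: sum.distrib sum.inter_filter[symmetric])
        also have "\<dots> \<le> V + c * 1"
        proof (rule add_mono)
          show "(\<Sum>i<length xs' - 1. \<bar>f (xs' ! Suc i) - f (xs' ! i)\<bar>) \<le> V" using B0[OF sorted' set'] .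
          have "card {i\<in>{..<length xs - 1}. P i} \<le> Suc 0"
          proof (subst card_le_Suc0_iff_eq, simp, intro ballI)
            fix i j assume ij: "i \<in> {i\<in>{..<length xs - 1}. P i}" "j \<in> {i\<in>{..<length xs - 1}. P i}"
            show "i = j"
            proof (rule ccontr)
              assume "i \<noteq> j"
              then consider "i < j" | "j < i" by linarith
              then show False
              proof cases
                case 1
                then have "xs ! Suc i \<le> xs ! j" using ij by (intro sorted_nth_mono[OF xs(1)]) auto
                moreover have "xs ! j \<in> set xs" using ij by auto
                ultimately show False using ij xsb[of "xs ! j"] unfolding P_def by auto
              next
                case 2
                then have "xs ! Suc j \<le> xs ! i" using ij by (intro sorted_nth_mono[OF xs(1)]) auto
                moreover have "xs ! i \<in> set xs" using ij by auto
                ultimately show False using ij xsb[of "xs ! i"] unfolding P_def by auto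
              qed
            qed
          qed
          then show "c * real (card {i\<in>{..<length xs - 1}. P i}) \<le> c * 1"
            unfolding c_def by (intro mult_left_mono) auto
        qed
        also have "\<dots> \<le> V + (\<bar>f t0 - L\<bar> + 1)"
          using y(1) unfolding c_def dist_real_def by (simp add: abs_le_iff abs_less_iff) linarith
        finally show ?thesis .
      qed
    qed
  qed
qed


thm finite_measure_subalgebra_def finite_measure_subalgebra_axioms_def
lemma sfs_of_prob: "prob_space M \<Longrightarrow> subalgebra M F \<Longrightarrow> sigma_finite_subalgebra M F"
  apply (rule finite_measure_subalgebra_is_sigma_finite)
  apply (unfold finite_measure_subalgebra_def finite_measure_subalgebra_axioms_def)
  apply (blast intro: prob_space.finite_measure)
  done
locale jl = prob_space M for M :: "'a measure" +
  fixes F :: "real \<Rightarrow> 'a measure" and S T :: "'a \<Rightarrow> ennreal"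
  assumes uh: "usual_hypotheses M F"
    and stS: "is_stopping_time M F S" and stT: "is_stopping_time M F T"
    and jump: "jumps_locally M F S T"
begin

lemma filt: "filtration_on M F"
  using uh unfolding usual_hypotheses_def by blast

lemma subalg: "0 \<le> t \<Longrightarrow> subalgebra M (F t)"
  using filt unfolding filtration_on_def by blast

lemma Fmono: "0 \<le> s \<Longrightarrow> s \<le> t \<Longrightarrow> sets (F s) \<subseteq> sets (F t)"
  using filt unfolding filtration_on_def by blast

lemma sfsF: "0 \<le> t \<Longrightarrow> sigma_finite_subalgebra M (F t)"
  by (rule sfs_of_prob[OF prob_space_axioms subalg])

lemma Fsets: "0 \<le> t \<Longrightarrow> A \<in> sets (F t) \<Longrightarrow> A \<in> sets M"
  using subalg unfolding subalgebra_def by auto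

lemma Fspace: "0 \<le> t \<Longrightarrow> space (F t) = space M"
  using subalg unfolding subalgebra_def by auto

definition Sl where "Sl t = {\<omega>\<in>space M. S \<omega> \<le> ennreal t}"
definition Tg where "Tg t = {\<omega>\<in>space M. ennreal t < T \<omega>}"
definition Cq where "Cq t = {\<omega>\<in>space M. S \<omega> \<le> ennreal t \<and> ennreal t < T \<omega>}"

lemma Cq_eq: "Cq t = Sl t \<inter> Tg t" unfolding Cq_def Sl_def Tg_def by auto

lemma Sl_F: "0 \<le> t \<Longrightarrow> Sl t \<in> sets (F t)"
  using stS unfolding is_stopping_time_def Sl_def by auto

lemma Tg_F: "0 \<le> t \<Longrightarrow> Tg t \<in> sets (F t)"
proof -
  assume t: "0 \<le> t"
  have "Tg t = space (F t) - {\<omega>\<in>space M. T \<omega> \<le> ennreal t}"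
    unfolding Tg_def using Fspace[OF t] by auto
  also have "\<dots> \<in> sets (F t)" using stT t unfolding is_stopping_time_def by auto
  finally show ?thesis .
qed

lemma Cq_F: "0 \<le> t \<Longrightarrow> Cq t \<in> sets (F t)"
  unfolding Cq_eq using Sl_F Tg_F by auto

abbreviation FS where "FS \<equiv> sets_at_stopping_time M F S"

lemma FS_sigma: "sigma_algebra (space M) FS"
  unfolding sigma_algebra_iff2
proof (intro conjI allI ballI impI)
  show "FS \<subseteq> Pow (space M)" unfolding sets_at_stopping_time_def using sets.sets_into_space by auto
  show "{} \<in> FS" unfolding sets_at_stopping_time_def by auto
next
  fix A assume A: "A \<in> FS"
  show "space M - A \<in> FS" unfolding sets_at_stopping_time_def
  proof (intro CollectI conjI allI impI)
    show "space M - A \<in> sets M" using A unfolding sets_at_stopping_time_def by auto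
    fix t :: real assume t: "0 \<le> t"
    have "(space M - A) \<inter> {\<omega>\<in>space M. S \<omega> \<le> ennreal t} = Sl t - (A \<inter> {\<omega>\<in>space M. S \<omega> \<le> ennreal t})"
      unfolding Sl_def by auto
    also have "\<dots> \<in> sets (F t)" using A t Sl_F unfolding sets_at_stopping_time_def by auto
    finally show "(space M - A) \<inter> {\<omega>\<in>space M. S \<omega> \<le> ennreal t} \<in> sets (F t)" .
  qed
next
  fix A :: "nat \<Rightarrow> 'a set" assume A: "range A \<subseteq> FS"
  show "\<Union> (range A) \<in> FS" unfolding sets_at_stopping_time_def
  proof (intro CollectI conjI allI impI)
    show "\<Union> (range A) \<in> sets M" using A unfolding sets_at_stopping_time_def by auto
    fix t :: real assume t: "0 \<le> t"
    have "\<Union> (range A) \<inter> {\<omega>\<in>space M. S \<omega> \<le> ennreal t} = (\<Union>i. A i \<inter> {\<omega>\<in>space M. S \<omega> \<le> ennreal t})" by auto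
    also have "\<dots> \<in> sets (F t)" using A t unfolding sets_at_stopping_time_def by (intro sets.countable_UN) auto
    finally show "\<Union> (range A) \<inter> {\<omega>\<in>space M. S \<omega> \<le> ennreal t} \<in> sets (F t)" .
  qed
qed

definition GS where "GS = sigma (space M) FS"

lemma sets_GS: "sets GS = FS"
  unfolding GS_def using sigma_algebra.sets_measure_of_eq[OF FS_sigma] by simp

lemma space_GS: "space GS = space M"
  unfolding GS_def by (simp add: space_measure_of_conv)

lemma subalgGS: "subalgebra M GS"
  unfolding subalgebra_def space_GS sets_GS sets_at_stopping_time_def by auto

lemma sfsG: "sigma_finite_subalgebra M GS"
  by (rule sfs_of_prob[OF prob_space_axioms subalgGS])

lemma Sl_G: "0 \<le> t \<Longrightarrow> Sl t \<in> sets GS"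
  unfolding sets_GS sets_at_stopping_time_def
proof (intro CollectI conjI allI impI)
  assume t: "0 \<le> t"
  show "Sl t \<in> sets M" using Fsets[OF t Sl_F[OF t]] .
  fix r :: real assume r: "0 \<le> r"
  have "Sl t \<inter> {\<omega>\<in>space M. S \<omega> \<le> ennreal r} = Sl (min t r)"
    unfolding Sl_def using t r by (auto simp: min_def intro: order_trans[OF _ ennreal_leI])
  also have "\<dots> \<in> sets (F r)" using Fmono[of "min t r" r] Sl_F[of "min t r"] t r by auto
  finally show "Sl t \<inter> {\<omega>\<in>space M. S \<omega> \<le> ennreal r} \<in> sets (F r)" .
qed

lemma GS_Sl_F: "0 \<le> t \<Longrightarrow> B \<in> sets GS \<Longrightarrow> B \<inter> Sl t \<in> sets (F t)"
  unfolding sets_GS sets_at_stopping_time_def Sl_def by auto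

lemma L1:
  assumes t: "0 \<le> t" and h: "h \<in> borel_measurable GS"
  shows "(\<lambda>\<omega>. indicator (Sl t) \<omega> * h \<omega> :: real) \<in> borel_measurable (F t)"
  unfolding borel_measurable_iff_le
proof
  fix a :: real
  have "{w \<in> space (F t). indicator (Sl t) w * h w \<le> a}
      = ({w\<in>space GS. h w \<le> a} \<inter> Sl t) \<union> (if 0 \<le> a then space (F t) - Sl t else {})"
    unfolding Fspace[OF t] space_GS Sl_def by (cases "0 \<le> a") (auto simp: indicator_def)
  also have "\<dots> \<in> sets (F t)"
  proof -
    have "{w\<in>space GS. h w \<le> a} \<in> sets GS" using h unfolding borel_measurable_iff_le by blast
    then have "{w\<in>space GS. h w \<le> a} \<inter> Sl t \<in> sets (F t)" by (rule GS_Sl_F[OF t])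
    moreover have "space (F t) - Sl t \<in> sets (F t)" using Sl_F[OF t] by auto
    ultimately show ?thesis by (cases "0 \<le> a") auto
  qed
  finally show "{w \<in> space (F t). indicator (Sl t) w * h w \<le> a} \<in> sets (F t)" .
qed


lemma TgM: "0 \<le> q \<Longrightarrow> Tg q \<in> sets M" using Fsets Tg_F by blast

lemma int_ind: "A \<in> sets M \<Longrightarrow> integrable M (indicator A :: 'a \<Rightarrow> real)"
  by (rule integrable_real_indicator) (auto simp: less_top[symmetric])

lemma D_bounds:
  assumes q: "0 \<le> q"
  shows "AE \<omega> in M. 0 \<le> real_cond_exp M GS (indicator (Tg q)) \<omega> \<and> real_cond_exp M GS (indicator (Tg q)) \<omega> \<le> 1"
proof -
  have i: "integrable M (indicator (Tg q) :: 'a \<Rightarrow> real)" by (rule int_ind[OF TgM[OF q]])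
  have "AE \<omega> in M. 0 \<le> real_cond_exp M GS (indicator (Tg q)) \<omega>"
    by (rule sigma_finite_subalgebra.real_cond_exp_ge_c[OF sfsG i]) auto
  moreover have "AE \<omega> in M. real_cond_exp M GS (indicator (Tg q)) \<omega> \<le> 1"
    by (rule sigma_finite_subalgebra.real_cond_exp_le_c[OF sfsG i]) (auto simp: indicator_def)
  ultimately show ?thesis by eventually_elim auto
qed

lemma ind_Cq: "indicator (Cq q) \<omega> = indicator (Sl q) \<omega> * (indicator (Tg q) \<omega> :: real)"
  by (simp add: Cq_eq indicator_inter_arith)

lemma KEY:
  assumes q: "0 \<le> q" and Y: "integrable M Y"
  shows "AE \<omega> in M. indicator (Cq q) \<omega> * real_cond_exp M (F q) Y \<omega> * real_cond_exp M GS (indicator (Tg q)) \<omega>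
        = indicator (Cq q) \<omega> * real_cond_exp M GS (\<lambda>\<omega>. Y \<omega> * indicator (Tg q) \<omega>) \<omega>"
proof -
  define ce where "ce = real_cond_exp M (F q) Y"
  define D where "D = real_cond_exp M GS (indicator (Tg q) :: 'a \<Rightarrow> real)"
  define N where "N = real_cond_exp M GS (\<lambda>\<omega>. Y \<omega> * indicator (Tg q) \<omega>)"
  have TgM': "Tg q \<in> sets M" by (rule TgM[OF q])
  have SlG: "Sl q \<in> sets GS" by (rule Sl_G[OF q])
  have Ym: "Y \<in> borel_measurable M" using Y by auto
  have YT: "integrable M (\<lambda>\<omega>. Y \<omega> * indicator (Tg q) \<omega>)" by (rule integrable_real_mult_indicator[OF TgM' Y])
  have YTm: "(\<lambda>\<omega>. Y \<omega> * indicator (Tg q) \<omega>) \<in> borel_measurable M" using YT by auto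
  have ce_int: "integrable M ce" unfolding ce_def by (rule sigma_finite_subalgebra.real_cond_exp_int(1)[OF sfsF[OF q] Y])
  have N_int: "integrable M N" unfolding N_def by (rule sigma_finite_subalgebra.real_cond_exp_int(1)[OF sfsG YT])
  have ceF: "ce \<in> borel_measurable (F q)" unfolding ce_def by simp
  have DG: "D \<in> borel_measurable GS" "N \<in> borel_measurable GS" unfolding D_def N_def by simp_all
  have DM: "D \<in> borel_measurable M" "N \<in> borel_measurable M" "ce \<in> borel_measurable M"
    unfolding D_def N_def ce_def by simp_all
  have Db: "AE \<omega> in M. 0 \<le> D \<omega> \<and> D \<omega> \<le> 1" unfolding D_def by (rule D_bounds[OF q])
  have indTF: "(indicator (Tg q) :: 'a \<Rightarrow> real) \<in> borel_measurable (F q)"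
    using Tg_F[OF q] by simp
  have indTM: "(indicator (Tg q) :: 'a \<Rightarrow> real) \<in> borel_measurable M"
    using TgM' by simp
  define f1 where "f1 \<omega> = indicator (Cq q) \<omega> * ce \<omega> * D \<omega>" for \<omega>
  define f2 where "f2 \<omega> = indicator (Cq q) \<omega> * N \<omega>" for \<omega>
  have f1e: "f1 = (\<lambda>\<omega>. (indicator (Tg q) \<omega> * ce \<omega>) * (indicator (Sl q) \<omega> * D \<omega>))"
    unfolding f1_def by (auto simp: ind_Cq mult_ac)
  have f2e: "f2 = (\<lambda>\<omega>. indicator (Tg q) \<omega> * (indicator (Sl q) \<omega> * N \<omega>))"
    unfolding f2_def by (auto simp: ind_Cq mult_ac)
  have f1F: "f1 \<in> borel_measurable (F q)" unfolding f1e
    by (intro borel_measurable_times indTF ceF L1[OF q DG(1)])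
  have f2F: "f2 \<in> borel_measurable (F q)" unfolding f2e
    by (intro borel_measurable_times indTF L1[OF q DG(2)])
  have f1M: "f1 \<in> borel_measurable M" using f1F measurable_from_subalg[OF subalg[OF q]] by blast
  have f2M: "f2 \<in> borel_measurable M" using f2F measurable_from_subalg[OF subalg[OF q]] by blast
  have f1i: "integrable M f1"
  proof (rule Bochner_Integration.integrable_bound[OF ce_int f1M])
    show "AE x in M. norm (f1 x) \<le> norm (ce x)" using Db
    proof eventually_elim
      case (elim x)
      have "\<bar>f1 x\<bar> = indicator (Cq q) x * \<bar>ce x\<bar> * \<bar>D x\<bar>" unfolding f1_def by (simp add: abs_mult)
      also have "\<dots> \<le> 1 * \<bar>ce x\<bar> * 1" using elim
        by (intro mult_mono) (auto simp: indicator_def)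
      finally show ?case by simp
    qed
  qed
  have f2i: "integrable M f2"
    by (rule Bochner_Integration.integrable_bound[OF N_int f2M]) (auto simp: f2_def indicator_def)
  have eqint: "(\<integral>x\<in>A. f1 x \<partial>M) = (\<integral>x\<in>A. f2 x \<partial>M)" if A: "A \<in> sets (F q)" for A
  proof -
    have AM: "A \<in> sets M" using Fsets[OF q A] .
    have "A \<inter> Cq q \<in> trace_sets (sets (F q)) (Cq q)" unfolding trace_sets_def using A by auto
    also have "trace_sets (sets (F q)) (Cq q) = trace_sets FS (Cq q)"
      using jump q unfolding jumps_locally_def Cq_def by blast
    finally obtain B0 where B0: "B0 \<in> FS" "A \<inter> Cq q = B0 \<inter> Cq q" unfolding trace_sets_def by auto
    define B where "B = B0 \<inter> Sl q"
    have BG: "B \<in> sets GS" unfolding B_def using B0(1) SlG sets_GS by auto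
    have BM: "B \<in> sets M" using BG subalgGS unfolding subalgebra_def by auto
    have ABe: "A \<inter> Cq q = B \<inter> Tg q" unfolding B_def using B0(2) Cq_eq by auto
    have indAB: "indicator A x * indicator (Cq q) x = (indicator B x * indicator (Tg q) x :: real)" for x
      by (metis ABe indicator_inter_arith)
    have indB: "indicator B x = indicator (Sl q) x * (indicator B x :: real)" for x
      unfolding B_def by (auto simp: indicator_def)
    have BDG: "(\<lambda>x. indicator B x * D x) \<in> borel_measurable GS" using BG DG by simp
    have BNG: "(\<lambda>x. indicator B x * N x) \<in> borel_measurable GS" using BG DG by simp
    define g1 where "g1 x = indicator B x * D x * indicator (Tg q) x" for x
    have g1F: "g1 \<in> borel_measurable (F q)"
    proof -
      have "g1 = (\<lambda>x. indicator (Tg q) x * (indicator (Sl q) x * (indicator B x * D x)))"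
        unfolding g1_def by (subst indB) (auto simp: mult_ac)
      then show ?thesis by (simp only:) (intro borel_measurable_times indTF L1[OF q BDG])
    qed
    have bnd1: "AE x in M. \<bar>g1 x\<bar> \<le> 1" using Db by eventually_elim (auto simp: g1_def indicator_def)
    have i1: "integrable M (\<lambda>x. g1 x * Y x)"
    proof (rule Bochner_Integration.integrable_bound[OF Y])
      show "(\<lambda>x. g1 x * Y x) \<in> borel_measurable M"
        using measurable_from_subalg[OF subalg[OF q] g1F] Ym by (intro borel_measurable_times)
      show "AE x in M. norm (g1 x * Y x) \<le> norm (Y x)" using bnd1
        by eventually_elim (auto simp: abs_mult intro: mult_left_le_one_le)
    qed
    have i2: "integrable M (\<lambda>x. (indicator B x * D x) * (Y x * indicator (Tg q) x))"
      using i1 by (simp add: g1_def mult_ac)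
    have i3: "integrable M (\<lambda>x. (indicator B x * N x) * indicator (Tg q) x)"
    proof (rule Bochner_Integration.integrable_bound[OF N_int])
      show "(\<lambda>x. (indicator B x * N x) * indicator (Tg q) x) \<in> borel_measurable M"
        using BM DM TgM' by (intro borel_measurable_times borel_measurable_indicator) auto
    qed (auto simp: indicator_def)
    have "(\<integral>x\<in>A. f1 x \<partial>M) = (\<integral>x. g1 x * ce x \<partial>M)"
      unfolding set_lebesgue_integral_def
      by (rule Bochner_Integration.integral_cong) (auto simp: f1_def g1_def indAB[symmetric] mult_ac)
    also have "\<dots> = (\<integral>x. g1 x * Y x \<partial>M)" unfolding ce_def
      by (rule sigma_finite_subalgebra.real_cond_exp_intg(2)[OF sfsF[OF q] i1 g1F Ym])
    also have "\<dots> = (\<integral>x. (indicator B x * D x) * (Y x * indicator (Tg q) x) \<partial>M)"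
      by (simp add: g1_def mult_ac)
    also have "\<dots> = (\<integral>x. (indicator B x * D x) * N x \<partial>M)" unfolding N_def
      by (rule sigma_finite_subalgebra.real_cond_exp_intg(2)[OF sfsG i2 BDG YTm, symmetric])
    also have "\<dots> = (\<integral>x. (indicator B x * N x) * D x \<partial>M)" by (simp add: mult_ac)
    also have "\<dots> = (\<integral>x. (indicator B x * N x) * indicator (Tg q) x \<partial>M)" unfolding D_def
      by (rule sigma_finite_subalgebra.real_cond_exp_intg(2)[OF sfsG i3 BNG indTM])
    also have "\<dots> = (\<integral>x\<in>A. f2 x \<partial>M)"
      unfolding set_lebesgue_integral_def
      by (rule Bochner_Integration.integral_cong) (auto simp: f2_def indAB[symmetric] mult_ac)
    finally show ?thesis .
  qed
  have a1: "AE x in M. real_cond_exp M (F q) f1 x = f2 x"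
    by (rule sigma_finite_subalgebra.real_cond_exp_charact[OF sfsF[OF q] eqint f1i f2i f2F])
  have a2: "AE x in M. real_cond_exp M (F q) f1 x = f1 x"
    by (rule sigma_finite_subalgebra.real_cond_exp_F_meas[OF sfsF[OF q] f1i f1F])
  from a1 a2 show ?thesis by eventually_elim (simp add: f1_def f2_def ce_def D_def N_def)
qed


definition DD where "DD q = real_cond_exp M GS (indicator (Tg q) :: 'a \<Rightarrow> real)"

lemma DD_G: "DD q \<in> borel_measurable GS" unfolding DD_def by simp
lemma DD_M: "DD q \<in> borel_measurable M" unfolding DD_def by simp

lemma lessG: "{\<omega>\<in>space M. DD q \<omega> < \<epsilon>} \<in> sets GS"
  using DD_G[of q] unfolding borel_measurable_iff_less space_GS by blast

lemma GM: "A \<in> sets GS \<Longrightarrow> A \<in> sets M" using subalgGS unfolding subalgebra_def by auto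

lemma CqM: "0 \<le> q \<Longrightarrow> Cq q \<in> sets M" using Fsets Cq_F by blast

lemma FIN:
  assumes R: "finite R" "R \<subseteq> {0..}" and eps: "0 \<le> \<epsilon>"
  shows "measure M {\<omega>\<in>space M. \<exists>q\<in>R. \<omega> \<in> Cq q \<and> DD q \<omega> < \<epsilon>} \<le> \<epsilon>"
proof -
  define H where "H q = (Sl q \<inter> {\<omega>\<in>space M. DD q \<omega> < \<epsilon>}) - (\<Union>q'\<in>{q'\<in>R. q' < q}. Sl q' \<inter> {\<omega>\<in>space M. DD q' \<omega> < \<epsilon>})" for q
  have HG: "H q \<in> sets GS" if "q \<in> R" for q
  proof -
    have "Sl q' \<inter> {\<omega>\<in>space M. DD q' \<omega> < \<epsilon>} \<in> sets GS" if "q' \<in> R" for q'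
      using Sl_G[of q'] lessG[of q' \<epsilon>] that R by auto
    then show ?thesis unfolding H_def using that R by (intro sets.Diff sets.finite_UN) auto
  qed
  have HM: "H q \<in> sets M" if "q \<in> R" for q using GM[OF HG[OF that]] .
  have TgR: "Tg q \<in> sets M" if "q \<in> R" for q using TgM that R by auto
  have sub: "{\<omega>\<in>space M. \<exists>q\<in>R. \<omega> \<in> Cq q \<and> DD q \<omega> < \<epsilon>} \<subseteq> (\<Union>q\<in>R. H q \<inter> Tg q)"
  proof
    fix \<omega> assume "\<omega> \<in> {\<omega>\<in>space M. \<exists>q\<in>R. \<omega> \<in> Cq q \<and> DD q \<omega> < \<epsilon>}"
    then obtain q where q: "q \<in> R" "\<omega> \<in> Cq q" "DD q \<omega> < \<epsilon>" "\<omega> \<in> space M" by auto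
    define K where "K = {q'\<in>R. \<omega> \<in> Sl q' \<and> DD q' \<omega> < \<epsilon>}"
    have K: "finite K" "q \<in> K" unfolding K_def using q R Cq_eq by auto
    define q0 where "q0 = Min K"
    have q0: "q0 \<in> K" "q0 \<le> q" unfolding q0_def using K by (auto intro: Min_in)
    have min: "\<And>q'. q' \<in> K \<Longrightarrow> q0 \<le> q'" unfolding q0_def using K by auto
    have "\<omega> \<in> H q0" unfolding H_def using q0 min q(4) unfolding K_def by force
    moreover have "\<omega> \<in> Tg q0"
    proof -
      have "ennreal q0 \<le> ennreal q" by (rule ennreal_leI[OF q0(2)])
      then show ?thesis using q unfolding Cq_def Tg_def by (auto intro: le_less_trans)
    qed
    ultimately show "\<omega> \<in> (\<Union>q\<in>R. H q \<inter> Tg q)" using q0 K_def by auto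
  qed
  have "measure M {\<omega>\<in>space M. \<exists>q\<in>R. \<omega> \<in> Cq q \<and> DD q \<omega> < \<epsilon>} \<le> measure M (\<Union>q\<in>R. H q \<inter> Tg q)"
    using sub HM TgR R by (intro finite_measure_mono) auto
  also have "\<dots> \<le> (\<Sum>q\<in>R. measure M (H q \<inter> Tg q))"
    using HM TgR R by (intro measure_UNION_le) auto
  also have "\<dots> \<le> (\<Sum>q\<in>R. \<epsilon> * measure M (H q))"
  proof (rule sum_mono)
    fix q assume q: "q \<in> R"
    have q0: "0 \<le> q" using q R by auto
    have iHT: "integrable M (\<lambda>x. indicator (H q) x * indicator (Tg q) x :: real)"
    proof -
      have "(\<lambda>x. indicator (H q) x * indicator (Tg q) x :: real) = indicator (H q \<inter> Tg q)"
        by (rule ext) (simp add: indicator_inter_arith)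
      then show ?thesis using int_ind[of "H q \<inter> Tg q"] HM[OF q] TgR[OF q] by simp
    qed
    have HGm: "(indicator (H q) :: 'a \<Rightarrow> real) \<in> borel_measurable GS" using HG[OF q] by simp
    have TgMm: "(indicator (Tg q) :: 'a \<Rightarrow> real) \<in> borel_measurable M" using TgR[OF q] by simp
    have "measure M (H q \<inter> Tg q) = (\<integral>x. indicator (H q) x * indicator (Tg q) x \<partial>M)"
      using HM[OF q] TgR[OF q] by (simp add: indicator_inter_arith[symmetric] Int_absorb2 sets.sets_into_space Int_assoc)
    also have "\<dots> = (\<integral>x. indicator (H q) x * DD q x \<partial>M)" unfolding DD_def
      by (rule sigma_finite_subalgebra.real_cond_exp_intg(2)[OF sfsG iHT HGm TgMm, symmetric])
    also have "\<dots> \<le> (\<integral>x. indicator (H q) x * \<epsilon> \<partial>M)"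
    proof (rule integral_mono)
      show "integrable M (\<lambda>x. indicator (H q) x * DD q x)" unfolding DD_def
        by (rule sigma_finite_subalgebra.real_cond_exp_intg(1)[OF sfsG iHT HGm TgMm])
      show "integrable M (\<lambda>x. indicator (H q) x * \<epsilon>)"
        using int_ind[OF HM[OF q]] by simp
      fix x show "indicator (H q) x * DD q x \<le> indicator (H q) x * \<epsilon>"
        unfolding H_def by (auto simp: indicator_def)
    qed
    also have "\<dots> = \<epsilon> * measure M (H q)"
      using HM[OF q] by (simp add: Int_absorb2 sets.sets_into_space mult.commute)
    finally show "measure M (H q \<inter> Tg q) \<le> \<epsilon> * measure M (H q)" .
  qed
  also have "\<dots> = \<epsilon> * measure M (\<Union>q\<in>R. H q)"
  proof -
    have "disjoint_family_on H R" unfolding disjoint_family_on_def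
    proof (intro ballI impI)
      fix q1 q2 assume q: "q1 \<in> R" "q2 \<in> R" "q1 \<noteq> q2"
      then consider "q1 < q2" | "q2 < q1" by linarith
      then show "H q1 \<inter> H q2 = {}" unfolding H_def using q by cases blast+
    qed
    then show ?thesis using HM R by (subst measure_finite_Union) (auto simp: sum_distrib_left)
  qed
  also have "\<dots> \<le> \<epsilon> * 1" using eps by (intro mult_left_mono) auto
  finally show ?thesis by simp
qed


lemma EpsM: "Q \<subseteq> {0..} \<Longrightarrow> countable Q \<Longrightarrow> {\<omega>\<in>space M. \<exists>q\<in>Q. \<omega> \<in> Cq q \<and> DD q \<omega> < \<epsilon>} \<in> sets M"
proof -
  assume Q: "Q \<subseteq> {0..}" "countable Q"
  have "{\<omega>\<in>space M. \<exists>q\<in>Q. \<omega> \<in> Cq q \<and> DD q \<omega> < \<epsilon>} = (\<Union>q\<in>Q. Cq q \<inter> {\<omega>\<in>space M. DD q \<omega> < \<epsilon>})"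
    by auto
  also have "\<dots> \<in> sets M"
    using Q CqM GM[OF lessG] by (intro sets.countable_UN'') auto
  finally show ?thesis .
qed

lemma Eps_bound:
  assumes Q: "Q \<subseteq> {0..}" "countable Q" and eps: "0 \<le> \<epsilon>"
  shows "measure M {\<omega>\<in>space M. \<exists>q\<in>Q. \<omega> \<in> Cq q \<and> DD q \<omega> < \<epsilon>} \<le> \<epsilon>"
proof (cases "Q = {}")
  case True then show ?thesis using eps by simp
next
  case False
  define r where "r = from_nat_into Q"
  have rr: "range r = Q" unfolding r_def using range_from_nat_into[OF False Q(2)] .
  define E where "E m = {\<omega>\<in>space M. \<exists>q\<in>r ` {..<m}. \<omega> \<in> Cq q \<and> DD q \<omega> < \<epsilon>}" for m
  have Esub: "r ` {..<m} \<subseteq> {0..}" "countable (r ` {..<m})" for m using rr Q by auto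
  have EM: "E m \<in> sets M" for m unfolding E_def by (rule EpsM[OF Esub])
  have inc: "incseq E" unfolding incseq_def E_def by (auto 4 3)
  have U: "(\<Union>m. E m) = {\<omega>\<in>space M. \<exists>q\<in>Q. \<omega> \<in> Cq q \<and> DD q \<omega> < \<epsilon>}"
    unfolding E_def rr[symmetric] by (auto 4 3)
  have "emeasure M (\<Union>m. E m) = (SUP m. emeasure M (E m))"
    using SUP_emeasure_incseq[of E M] EM inc by (metis image_subset_iff)
  also have "\<dots> \<le> ennreal \<epsilon>"
  proof (rule SUP_least)
    fix m
    have "measure M (E m) \<le> \<epsilon>" unfolding E_def using Esub by (intro FIN eps) auto
    then show "emeasure M (E m) \<le> ennreal \<epsilon>" by (simp add: emeasure_eq_measure ennreal_leI)
  qed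
  finally show ?thesis unfolding U using eps by (simp add: emeasure_eq_measure)
qed

lemma LB:
  assumes Q: "Q \<subseteq> {0..}" "countable Q"
  shows "AE \<omega> in M. \<exists>e>0. \<forall>q\<in>Q. \<omega> \<in> Cq q \<longrightarrow> e \<le> DD q \<omega>"
proof -
  define E where "E k = {\<omega>\<in>space M. \<exists>q\<in>Q. \<omega> \<in> Cq q \<and> DD q \<omega> < 1 / real (Suc k)}" for k
  define Bad where "Bad = (\<Inter>k. E k)"
  have EM: "E k \<in> sets M" for k unfolding E_def by (rule EpsM[OF Q])
  have BM: "Bad \<in> sets M" unfolding Bad_def using EM by auto
  have mb: "measure M Bad \<le> 1 / real (Suc k)" for k
  proof -
    have "measure M Bad \<le> measure M (E k)" unfolding Bad_def using EM by (intro finite_measure_mono) auto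
    also have "\<dots> \<le> 1 / real (Suc k)" unfolding E_def by (rule Eps_bound[OF Q]) simp
    finally show ?thesis .
  qed
  have "measure M Bad = 0"
  proof (rule ccontr)
    assume "measure M Bad \<noteq> 0"
    then have pos: "measure M Bad > 0" using measure_nonneg[of M Bad] by linarith
    then obtain k where "1 / real (Suc k) < measure M Bad"
      using reals_Archimedean[OF pos] by (auto simp: field_simps inverse_eq_divide)
    then show False using mb[of k] by linarith
  qed
  then have "Bad \<in> null_sets M" using BM by (simp add: emeasure_eq_measure null_sets_def)
  then show ?thesis
  proof (rule AE_I')
    show "{\<omega> \<in> space M. \<not> (\<exists>e>0. \<forall>q\<in>Q. \<omega> \<in> Cq q \<longrightarrow> e \<le> DD q \<omega>)} \<subseteq> Bad"
    proof
      fix \<omega> assume "\<omega> \<in> {\<omega> \<in> space M. \<not> (\<exists>e>0. \<forall>q\<in>Q. \<omega> \<in> Cq q \<longrightarrow> e \<le> DD q \<omega>)}"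
      then have w: "\<omega> \<in> space M" "\<And>e. e > 0 \<Longrightarrow> \<exists>q\<in>Q. \<omega> \<in> Cq q \<and> DD q \<omega> < e" by (auto simp: not_le)
      show "\<omega> \<in> Bad" unfolding Bad_def E_def using w by auto
    qed
  qed
qed


lemma core:
  fixes X P Q :: "real \<Rightarrow> 'a \<Rightarrow> real" and n u :: real
  assumes u: "0 \<le> u" "u < n"
    and PQ: "\<And>q. 0 \<le> q \<Longrightarrow> q \<le> n \<Longrightarrow> integrable M (P q) \<and> integrable M (Q q) \<and> (\<forall>\<omega>\<in>space M. 0 \<le> P q \<omega> \<and> 0 \<le> Q q \<omega>)"
    and PQm: "\<And>q q' \<omega>. 0 \<le> q \<Longrightarrow> q \<le> q' \<Longrightarrow> q' \<le> n \<Longrightarrow> \<omega> \<in> space M \<Longrightarrow>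
        P q' \<omega> * indicator (Tg q') \<omega> \<le> P q \<omega> * indicator (Tg q) \<omega> \<and> Q q' \<omega> * indicator (Tg q') \<omega> \<le> Q q \<omega> * indicator (Tg q) \<omega>"
    and Xce: "\<And>q. 0 \<le> q \<Longrightarrow> q \<le> n \<Longrightarrow> AE \<omega> in M. X q \<omega> = real_cond_exp M (F q) (\<lambda>\<omega>. P q \<omega> - Q q \<omega>) \<omega>"
    and cad: "AE \<omega> in M. cadlag (\<lambda>t. X t \<omega>)"
  shows "AE \<omega> in M. finite_variation_on (\<lambda>t. X t \<omega>) (stoch_interval_oc S T \<omega> \<inter> {0..u})"
proof -
  define Qn where "Qn = {q. q \<in> \<rat> \<and> 0 \<le> q \<and> q \<le> n}"
  have Qc: "countable Qn" unfolding Qn_def by (rule countable_subset[OF _ countable_rat]) auto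
  have Q0: "Qn \<subseteq> {0..}" unfolding Qn_def by auto
  have QQ: "\<And>q. q \<in> Qn \<Longrightarrow> 0 \<le> q \<and> q \<le> n" unfolding Qn_def by auto
  have zQ: "0 \<in> Qn" unfolding Qn_def using u by auto
  define NP where "NP q = real_cond_exp M GS (\<lambda>\<omega>. P q \<omega> * indicator (Tg q) \<omega>)" for q
  define NQ where "NQ q = real_cond_exp M GS (\<lambda>\<omega>. Q q \<omega> * indicator (Tg q) \<omega>)" for q
  define ce where "ce q = real_cond_exp M (F q) (\<lambda>\<omega>. P q \<omega> - Q q \<omega>)" for q
  have iP: "integrable M (\<lambda>\<omega>. P q \<omega> * indicator (Tg q) \<omega>)" "integrable M (\<lambda>\<omega>. Q q \<omega> * indicator (Tg q) \<omega>)"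
    if "0 \<le> q" "q \<le> n" for q
    using PQ[OF that] TgM[OF that(1)] by (auto intro: integrable_real_mult_indicator)
  have a: "AE \<omega> in M. \<forall>q\<in>Qn. X q \<omega> = ce q \<omega>"
    unfolding AE_ball_countable[OF Qc] ce_def using Xce QQ by blast
  have b: "AE \<omega> in M. \<forall>q\<in>Qn. indicator (Cq q) \<omega> * ce q \<omega> * DD q \<omega> = indicator (Cq q) \<omega> * (NP q \<omega> - NQ q \<omega>)"
    unfolding AE_ball_countable[OF Qc]
  proof
    fix q assume "q \<in> Qn"
    then have q: "0 \<le> q" "q \<le> n" using QQ by auto
    have Yi: "integrable M (\<lambda>\<omega>. P q \<omega> - Q q \<omega>)" using PQ[OF q] by auto
    have e1: "(\<lambda>\<omega>. (P q \<omega> - Q q \<omega>) * indicator (Tg q) \<omega>) = (\<lambda>\<omega>. P q \<omega> * indicator (Tg q) \<omega> - Q q \<omega> * indicator (Tg q) \<omega>)"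
      by (rule ext) (simp add: algebra_simps)
    have k: "AE \<omega> in M. indicator (Cq q) \<omega> * ce q \<omega> * DD q \<omega>
        = indicator (Cq q) \<omega> * real_cond_exp M GS (\<lambda>\<omega>. (P q \<omega> - Q q \<omega>) * indicator (Tg q) \<omega>) \<omega>"
      using KEY[OF q(1) Yi] unfolding ce_def DD_def .
    have d: "AE \<omega> in M. real_cond_exp M GS (\<lambda>\<omega>. P q \<omega> * indicator (Tg q) \<omega> - Q q \<omega> * indicator (Tg q) \<omega>) \<omega> = NP q \<omega> - NQ q \<omega>"
      unfolding NP_def NQ_def by (rule sigma_finite_subalgebra.real_cond_exp_diff[OF sfsG iP[OF q]])
    from k d show "AE \<omega> in M. indicator (Cq q) \<omega> * ce q \<omega> * DD q \<omega> = indicator (Cq q) \<omega> * (NP q \<omega> - NQ q \<omega>)"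
      unfolding e1 by eventually_elim simp
  qed
  have c: "AE \<omega> in M. \<forall>q\<in>Qn. 0 \<le> DD q \<omega> \<and> 0 \<le> NP q \<omega> \<and> 0 \<le> NQ q \<omega>"
    unfolding AE_ball_countable[OF Qc]
  proof
    fix q assume "q \<in> Qn"
    then have q: "0 \<le> q" "q \<le> n" using QQ by auto
    have c1: "AE \<omega> in M. 0 \<le> DD q \<omega>" using D_bounds[OF q(1)] unfolding DD_def by eventually_elim auto
    have c2: "AE \<omega> in M. 0 \<le> NP q \<omega>" unfolding NP_def
      by (rule sigma_finite_subalgebra.real_cond_exp_pos[OF sfsG]) (use PQ[OF q] iP[OF q] in auto)
    have c3: "AE \<omega> in M. 0 \<le> NQ q \<omega>" unfolding NQ_def
      by (rule sigma_finite_subalgebra.real_cond_exp_pos[OF sfsG]) (use PQ[OF q] iP[OF q] in auto)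
    from c1 c2 c3 show "AE \<omega> in M. 0 \<le> DD q \<omega> \<and> 0 \<le> NP q \<omega> \<and> 0 \<le> NQ q \<omega>" by eventually_elim auto
  qed
  have d: "AE \<omega> in M. \<forall>p\<in>Qn \<times> Qn. fst p \<le> snd p \<longrightarrow> DD (snd p) \<omega> \<le> DD (fst p) \<omega> \<and> NP (snd p) \<omega> \<le> NP (fst p) \<omega> \<and> NQ (snd p) \<omega> \<le> NQ (fst p) \<omega>"
    unfolding AE_ball_countable[OF countable_SIGMA[OF Qc Qc]]
  proof
    fix p assume "p \<in> Qn \<times> Qn"
    then obtain q q' where p: "p = (q, q')" "q \<in> Qn" "q' \<in> Qn" by auto
    show "AE \<omega> in M. fst p \<le> snd p \<longrightarrow> DD (snd p) \<omega> \<le> DD (fst p) \<omega> \<and> NP (snd p) \<omega> \<le> NP (fst p) \<omega> \<and> NQ (snd p) \<omega> \<le> NQ (fst p) \<omega>"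
    proof (cases "q \<le> q'")
      case False then show ?thesis using p by simp
    next
      case True
      have q: "0 \<le> q" "q \<le> n" "0 \<le> q'" "q' \<le> n" using p QQ by auto
      have d1: "AE \<omega> in M. DD q' \<omega> \<le> DD q \<omega>" unfolding DD_def
      proof (rule sigma_finite_subalgebra.real_cond_exp_mono[OF sfsG])
        show "AE x in M. (indicator (Tg q') x :: real) \<le> indicator (Tg q) x"
          using True by (auto simp: indicator_def Tg_def intro: le_less_trans[OF ennreal_leI])
      qed (use int_ind TgM q in auto)
      have d2: "AE \<omega> in M. NP q' \<omega> \<le> NP q \<omega>" unfolding NP_def
        by (rule sigma_finite_subalgebra.real_cond_exp_mono[OF sfsG]) (use PQm[OF q(1) True q(4)] iP q in auto)
      have d3: "AE \<omega> in M. NQ q' \<omega> \<le> NQ q \<omega>" unfolding NQ_def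
        by (rule sigma_finite_subalgebra.real_cond_exp_mono[OF sfsG]) (use PQm[OF q(1) True q(4)] iP q in auto)
      from d1 d2 d3 have "AE \<omega> in M. DD q' \<omega> \<le> DD q \<omega> \<and> NP q' \<omega> \<le> NP q \<omega> \<and> NQ q' \<omega> \<le> NQ q \<omega>"
        by eventually_elim auto
      then show ?thesis using p by simp
    qed
  qed
  have e: "AE \<omega> in M. \<exists>e>0. \<forall>q\<in>Qn. \<omega> \<in> Cq q \<longrightarrow> e \<le> DD q \<omega>" by (rule LB[OF Q0 Qc])
  from a b c d e cad AE_space show ?thesis
  proof eventually_elim
    case (elim \<omega>)
    from elim(5) obtain e where e: "e > 0" "\<And>q. q \<in> Qn \<Longrightarrow> \<omega> \<in> Cq q \<Longrightarrow> e \<le> DD q \<omega>" by blast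
    define R where "R = {q. q \<in> \<rat> \<and> 0 \<le> q \<and> q \<le> n \<and> S \<omega> < ennreal q \<and> ennreal q < T \<omega>}"
    have RQ: "\<And>q. q \<in> R \<Longrightarrow> q \<in> Qn \<and> \<omega> \<in> Cq q"
      unfolding R_def Qn_def Cq_def using elim(7) by auto
    have mono: "\<And>q q'. q \<in> Qn \<Longrightarrow> q' \<in> Qn \<Longrightarrow> q \<le> q' \<Longrightarrow> NP q' \<omega> \<le> NP q \<omega> \<and> NQ q' \<omega> \<le> NQ q \<omega> \<and> DD q' \<omega> \<le> DD q \<omega>"
      using elim(4) by fastforce
    have pos: "\<And>q. q \<in> Qn \<Longrightarrow> 0 \<le> DD q \<omega> \<and> 0 \<le> NP q \<omega> \<and> 0 \<le> NQ q \<omega>" using elim(3) by blast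
    have "finite_variation_on (\<lambda>t. X t \<omega>) ({t. 0 \<le> t \<and> S \<omega> < ennreal t \<and> ennreal t \<le> T \<omega>} \<inter> {0..u})"
    proof (rule det_fv[OF elim(6) u e(1) _ _ _ R_def])
      show "0 \<le> NP 0 \<omega>" "0 \<le> NQ 0 \<omega>" "0 \<le> DD 0 \<omega>" using pos[OF zQ] by auto
      fix q assume q: "q \<in> R"
      have qQ: "q \<in> Qn" and qC: "\<omega> \<in> Cq q" using RQ[OF q] by auto
      have eD: "e \<le> DD q \<omega>" using e(2)[OF qQ qC] .
      have "ce q \<omega> * DD q \<omega> = NP q \<omega> - NQ q \<omega>" using elim(2) qQ qC by force
      then show "X q \<omega> = (NP q \<omega> - NQ q \<omega>) / DD q \<omega>"
        using elim(1) qQ eD e(1) by (auto simp: field_simps)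
      have "0 \<le> q" using qQ QQ by auto
      then show "0 \<le> NP q \<omega> \<and> NP q \<omega> \<le> NP 0 \<omega> \<and> 0 \<le> NQ q \<omega> \<and> NQ q \<omega> \<le> NQ 0 \<omega> \<and> e \<le> DD q \<omega> \<and> DD q \<omega> \<le> DD 0 \<omega>"
        using pos[OF qQ] mono[OF zQ qQ] eD by auto
    next
      fix q q' assume "q \<in> R" "q' \<in> R" "q \<le> q'"
      then show "NP q' \<omega> \<le> NP q \<omega> \<and> NQ q' \<omega> \<le> NQ q \<omega> \<and> DD q' \<omega> \<le> DD q \<omega>"
        using mono RQ by blast
    qed
    then show ?case unfolding stoch_interval_oc_def .
  qed
qed

end


lemma fv_mono: "finite_variation_on f A \<Longrightarrow> B \<subseteq> A \<Longrightarrow> finite_variation_on f B"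
  unfolding finite_variation_on_def by blast

context jl begin

lemma fv_all:
  assumes "\<And>m::nat. AE \<omega> in M. finite_variation_on (\<lambda>t. X t \<omega>) (stoch_interval_oc S T \<omega> \<inter> {0..real m})"
  shows "fv_on_stoch_interval M X S T"
proof -
  have "AE \<omega> in M. \<forall>m::nat. finite_variation_on (\<lambda>t. X t \<omega>) (stoch_interval_oc S T \<omega> \<inter> {0..real m})"
    using assms by (simp add: AE_all_countable)
  then show ?thesis unfolding fv_on_stoch_interval_def
  proof eventually_elim
    case (elim \<omega>)
    show ?case
    proof (intro allI impI)
      fix u :: real assume "0 \<le> u"
      have "u \<le> real (nat \<lceil>u\<rceil>)" by linarith
      then have "stoch_interval_oc S T \<omega> \<inter> {0..u} \<subseteq> stoch_interval_oc S T \<omega> \<inter> {0..real (nat \<lceil>u\<rceil>)}"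
        using \<open>u \<le> real (nat \<lceil>u\<rceil>)\<close> by (intro Int_mono order_refl subsetI) (simp only: atLeastAtMost_iff, linarith)
      then show "finite_variation_on (\<lambda>t. X t \<omega>) (stoch_interval_oc S T \<omega> \<inter> {0..u})"
        using elim fv_mono by blast
    qed
  qed
qed

lemma indTg_mono: "q \<le> q' \<Longrightarrow> (indicator (Tg q') \<omega> :: real) \<le> indicator (Tg q) \<omega>"
  by (auto simp: indicator_def Tg_def intro: le_less_trans[OF ennreal_leI])

lemma part1:
  assumes mart: "martingale M F X" and cad: "AE \<omega> in M. cadlag (\<lambda>t. X t \<omega>)"
  shows "fv_on_stoch_interval M X S T"
proof (rule fv_all)
  fix m :: nat
  define n where "n = real m + 1"
  have n0: "0 \<le> n" unfolding n_def by simp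
  have Xn: "integrable M (X n)" using mart n0 unfolding martingale_def by blast
  show "AE \<omega> in M. finite_variation_on (\<lambda>t. X t \<omega>) (stoch_interval_oc S T \<omega> \<inter> {0..real m})"
  proof (rule core[where P = "\<lambda>q \<omega>. max (X n \<omega>) 0" and Q = "\<lambda>q \<omega>. max (- X n \<omega>) 0" and n = n])
    show "0 \<le> real m" "real m < n" unfolding n_def by auto
    fix q assume q: "0 \<le> q" "q \<le> n"
    show "integrable M (\<lambda>\<omega>. max (X n \<omega>) 0) \<and> integrable M (\<lambda>\<omega>. max (- X n \<omega>) 0) \<and> (\<forall>\<omega>\<in>space M. 0 \<le> max (X n \<omega>) 0 \<and> 0 \<le> max (- X n \<omega>) 0)"
      using Xn by auto
    have "(\<lambda>\<omega>. max (X n \<omega>) 0 - max (- X n \<omega>) 0) = X n" by (rule ext) (simp add: max_def)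
    moreover have "AE \<omega> in M. real_cond_exp M (F q) (X n) \<omega> = X q \<omega>" using mart q unfolding martingale_def by blast
    ultimately show "AE \<omega> in M. X q \<omega> = real_cond_exp M (F q) (\<lambda>\<omega>. max (X n \<omega>) 0 - max (- X n \<omega>) 0) \<omega>"
      by (auto elim: AE_mp)
  next
    fix q q' \<omega> assume "0 \<le> q" "q \<le> q'" "q' \<le> n" "\<omega> \<in> space M"
    then show "max (X n \<omega>) 0 * indicator (Tg q') \<omega> \<le> max (X n \<omega>) 0 * indicator (Tg q) \<omega> \<and>
          max (- X n \<omega>) 0 * indicator (Tg q') \<omega> \<le> max (- X n \<omega>) 0 * indicator (Tg q) \<omega>"
      using indTg_mono[of q q' \<omega>] by (auto intro: mult_left_mono)
  qed (rule cad)
qed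

lemma part2:
  fixes \<tau> :: "'a \<Rightarrow> real"
  assumes tm: "\<tau> \<in> borel_measurable M"
    and Z: "\<forall>t\<ge>0. AE \<omega> in M. Z t \<omega> = real_cond_exp M (F t) (indicator {\<omega>\<in>space M. t < \<tau> \<omega>}) \<omega>"
    and cad: "AE \<omega> in M. cadlag (\<lambda>t. Z t \<omega>)"
  shows "fv_on_stoch_interval M Z S T"
proof (rule fv_all)
  fix m :: nat
  define n where "n = real m + 1"
  have setM: "{\<omega>\<in>space M. q < \<tau> \<omega>} \<in> sets M" for q using tm by measurable
  show "AE \<omega> in M. finite_variation_on (\<lambda>t. Z t \<omega>) (stoch_interval_oc S T \<omega> \<inter> {0..real m})"
  proof (rule core[where P = "\<lambda>q. indicator {\<omega>\<in>space M. q < \<tau> \<omega>}" and Q = "\<lambda>q \<omega>. 0" and n = n])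
    show "0 \<le> real m" "real m < n" unfolding n_def by auto
    fix q assume q: "0 \<le> q" "q \<le> n"
    show "integrable M (indicator {\<omega>\<in>space M. q < \<tau> \<omega>} :: 'a \<Rightarrow> real) \<and> integrable M (\<lambda>\<omega>. 0::real) \<and>
       (\<forall>\<omega>\<in>space M. 0 \<le> (indicator {\<omega>\<in>space M. q < \<tau> \<omega>} \<omega> :: real) \<and> 0 \<le> (0::real))"
      using int_ind[OF setM] by auto
    have "(\<lambda>\<omega>. indicator {\<omega>\<in>space M. q < \<tau> \<omega>} \<omega> - 0) = (indicator {\<omega>\<in>space M. q < \<tau> \<omega>} :: 'a \<Rightarrow> real)" by simp
    then show "AE \<omega> in M. Z q \<omega> = real_cond_exp M (F q) (\<lambda>\<omega>. indicator {\<omega>\<in>space M. q < \<tau> \<omega>} \<omega> - 0) \<omega>"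
      using Z q by simp
  next
    fix q q' \<omega> assume qq: "0 \<le> q" "q \<le> q'" "q' \<le> n" "\<omega> \<in> space M"
    have "(indicator {\<omega>\<in>space M. q' < \<tau> \<omega>} \<omega> :: real) \<le> indicator {\<omega>\<in>space M. q < \<tau> \<omega>} \<omega>"
      using qq by (auto simp: indicator_def)
    then show "indicator {\<omega>\<in>space M. q' < \<tau> \<omega>} \<omega> * indicator (Tg q') \<omega> \<le> indicator {\<omega>\<in>space M. q < \<tau> \<omega>} \<omega> * (indicator (Tg q) \<omega> :: real) \<and>
          (0::real) * indicator (Tg q') \<omega> \<le> 0 * indicator (Tg q) \<omega>"
      using indTg_mono[OF qq(2), of \<omega>] by (auto intro: mult_mono)
  qed (rule cad)
qed

end

theorem lemma2p1:
  fixes M :: "'a measure" and F :: "real \<Rightarrow> 'a measure" and S T :: "'a \<Rightarrow> ennreal"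
  assumes "prob_space M"
    and "usual_hypotheses M F"
    and "is_stopping_time M F S" and "is_stopping_time M F T"
    and "jumps_locally M F S T"
  shows "(\<forall>X. martingale M F X \<longrightarrow> uniformly_integrable M X \<longrightarrow>
            (AE \<omega> in M. cadlag (\<lambda>t. X t \<omega>)) \<longrightarrow> fv_on_stoch_interval M X S T)
    \<and> (\<forall>(\<tau>::'a \<Rightarrow> real) Z. \<tau> \<in> borel_measurable M \<longrightarrow> (\<forall>\<omega>\<in>space M. 0 < \<tau> \<omega>) \<longrightarrow>
          (\<forall>t\<ge>0. AE \<omega> in M. Z t \<omega> =
               real_cond_exp M (F t) (indicator {\<omega>\<in>space M. t < \<tau> \<omega>}) \<omega>) \<longrightarrow>
          (AE \<omega> in M. cadlag (\<lambda>t. Z t \<omega>)) \<longrightarrow>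
          fv_on_stoch_interval M Z S T)"
proof -
  interpret jl M F S T
    using assms by (simp add: jl_def jl_axioms_def)
  show ?thesis using part1 part2 by blast
qed

end
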